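(* For every integer $n\ge 1$, the origami flip graph ${\rm OFG}(M_{2,n})$ of the $2\times n$ Miura-ori has exactly $2\cdot 3^{n-1}$ vertices.
   Context: The $2\times n$ Miura-ori $M_{2,n}$ ($n\ge 1$) is the crease pattern made of $2$ rows and $n$ columns of congruent parallelograms, with faces $\alpha_{i,j}$ ($i\in\{1,2\}$ the row, $j\in\{1,\dots,n\}$ the column). Its interior vertices are $x_1,\dots,x_{n-1}$ (on the middle line, left to right) and its creases are $e_0$ together with $e_{3k-1},e_{3k},e_{3k+1}$ for $k=1,\dots,n-1$ (so $3n-2$ creases; we write $e_0$ also as $e_{3\cdot 1-3}$). At $x_k$ the incident creases are: left $e_{3k-3}$, top $e_{3k-1}$, right $e_{3k}$, bottom $e_{3k+1}$; the two sector angles adjacent to the left crease are obtuse, the other two are acute. Face $\alpha_{1,j}$ is bordered by those of $e_{3j-4}$ (present iff $j\ge2$), $e_{3j-3}$, $e_{3j-1}$ (present iff $j\le n-1$); face $\alpha_{2,j}$ is bordered by those of $e_{3j-2}$ (present iff $j\ge 2$), $e_{3j-3}$, $e_{3j+1}$ (present iff $j\le n-1$). A mountain–valley (MV) assignment is a map $\mu$ from the creases to $\{1,-1\}$ ($1$ = mountain $M$, $-1$ = valley $V$). It is locally valid if for every $k=1,\dots,n-1$ exactly one of $\mu(e_{3k-1}),\mu(e_{3k}),\mu(e_{3k+1})$ differs from $\mu(e_{3k-3})$ (equivalently: at each vertex three creases have one parity and one the other, and the minority crease is not the one between the two obtuse angles). The face flip of $\alpha$ turns $\mu$ into $\mu_\alpha$,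 which negates $\mu$ on the creases bordering $\alpha$ and agrees with $\mu$ elsewhere; $\alpha$ is flippable under $\mu$ if both $\mu$ and $\mu_\alpha$ are locally valid. ${\rm OFG}(M_{2,n})$ is the graph whose vertices are the locally valid MV assignments of $M_{2,n}$, with $\mu\sim\mu_\alpha$ whenever $\alpha$ is flippable under $\mu$. *)

theory Defs
  imports "HOL-Library.FuncSet"
begin

text \<open>Creases of the 2 x n Miura-ori, indexed by naturals: e_0 and e_{3k-1}, e_{3k}, e_{3k+1}
  for k = 1..n-1.\<close>
definition creases :: "nat \<Rightarrow> nat set" where
  "creases n = {0} \<union> (\<Union>k\<in>{1..n-1}. {3*k-1, 3*k, 3*k+1})"

definition faces :: "nat \<Rightarrow> (nat \<times> nat) set" where
  "faces n = {1,2} \<times> {1..n}"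

definition face_border :: "nat \<Rightarrow> nat \<times> nat \<Rightarrow> nat set" where
  "face_border n f = (case f of (i, j) \<Rightarrow>
     if i = 1 then
       (if 2 \<le> j then {3*j-4} else {}) \<union> {3*j-3} \<union> (if j \<le> n-1 then {3*j-1} else {})
     else
       (if 2 \<le> j then {3*j-2} else {}) \<union> {3*j-3} \<union> (if j \<le> n-1 then {3*j+1} else {}))"

text \<open>MV assignments: maps from the creases to {1,-1} (1 = mountain, -1 = valley).\<close>
definition MV_assignments :: "nat \<Rightarrow> (nat \<Rightarrow> int) set" where
  "MV_assignments n = (creases n \<rightarrow>\<^sub>E {1, -1})"

definition locally_valid :: "nat \<Rightarrow> (nat \<Rightarrow> int) \<Rightarrow> bool" where
  "locally_valid n \<mu> \<longleftrightarrow> \<mu> \<in> MV_assignments n \<and>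
     (\<forall>k\<in>{1..n-1}. card {c \<in> {3*k-1, 3*k, 3*k+1}. \<mu> c \<noteq> \<mu> (3*k-3)} = 1)"

definition face_flip :: "nat \<Rightarrow> nat \<times> nat \<Rightarrow> (nat \<Rightarrow> int) \<Rightarrow> (nat \<Rightarrow> int)" where
  "face_flip n \<alpha> \<mu> = (\<lambda>c. if c \<in> face_border n \<alpha> then - \<mu> c else \<mu> c)"

definition flippable :: "nat \<Rightarrow> nat \<times> nat \<Rightarrow> (nat \<Rightarrow> int) \<Rightarrow> bool" where
  "flippable n \<alpha> \<mu> \<longleftrightarrow> locally_valid n \<mu> \<and> locally_valid n (face_flip n \<alpha> \<mu>)"

definition OFG_vertices :: "nat \<Rightarrow> (nat \<Rightarrow> int) set" where
  "OFG_vertices n = {\<mu>. locally_valid n \<mu>}"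

definition OFG_edges :: "nat \<Rightarrow> (nat \<Rightarrow> int) set set" where
  "OFG_edges n = {{\<mu>, face_flip n \<alpha> \<mu>} | \<mu> \<alpha>. \<alpha> \<in> faces n \<and> flippable n \<alpha> \<mu>}"

definition OFG :: "nat \<Rightarrow> (nat \<Rightarrow> int) set \<times> (nat \<Rightarrow> int) set set" where
  "OFG n = (OFG_vertices n, OFG_edges n)"

end

theory Submission
  imports Defs
begin

lemma cr_le: "1 \<le> m \<Longrightarrow> c \<in> creases m \<Longrightarrow> c \<le> 3*m-2"
  unfolding creases_def by auto

lemma cr_Suc: "1 \<le> m \<Longrightarrow> creases (Suc m) = creases m \<union> {3*m-1, 3*m, 3*m+1}"
proof -
  assume m: "1 \<le> m"
  have "{1..Suc m - 1} = {1..m-1} \<union> {m}" using m by auto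
  then show ?thesis unfolding creases_def by auto
qed

lemma cr_mid: "1 \<le> k \<Longrightarrow> k \<le> m-1 \<Longrightarrow> {3*k-1, 3*k, 3*k+1} \<subseteq> creases m"
proof -
  assume "1 \<le> k" "k \<le> m-1"
  then have km: "k \<in> {1..m-1}" by simp
  have "{3*k-1, 3*k, 3*k+1} \<subseteq> (\<Union>k\<in>{1..m-1}. {3*k-1, 3*k, 3*k+1})"
    by (rule UN_upper[OF km])
  then show ?thesis unfolding creases_def by (rule order_trans) (rule Un_upper2)
qed

lemma cr_left: "1 \<le> k \<Longrightarrow> k \<le> m \<Longrightarrow> 3*k-3 \<in> creases m"
proof -
  assume k: "1 \<le> k" "k \<le> m"
  show ?thesis
  proof (cases "k = 1")
    case True then show ?thesis unfolding creases_def by simp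
  next
    case False
    then have a: "1 \<le> k-1" "k-1 \<le> m-1" and b: "3*k-3 = 3*(k-1)" using k by auto
    have "3*(k-1) \<in> {3*(k-1)-1, 3*(k-1), 3*(k-1)+1}" by simp
    then show ?thesis unfolding b using cr_mid[OF a] by (rule subsetD[rotated])
  qed
qed

lemma card3: "p \<noteq> q \<Longrightarrow> p \<noteq> r \<Longrightarrow> q \<noteq> r \<Longrightarrow>
  card {c \<in> {p,q,r}. P c} = 1 \<longleftrightarrow>
   (P p \<and> \<not> P q \<and> \<not> P r) \<or> (\<not> P p \<and> P q \<and> \<not> P r) \<or> (\<not> P p \<and> \<not> P q \<and> P r)"
proof -
  assume d: "p \<noteq> q" "p \<noteq> r" "q \<noteq> r"
  have e: "{c \<in> {p,q,r}. P c} = (if P p then {p} else {}) \<union> (if P q then {q} else {}) \<union> (if P r then {r} else {})"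
    by auto
  show ?thesis unfolding e using d by (cases "P p"; cases "P q"; cases "P r") (simp_all add: card_insert_if)
qed

definition ext3 :: "nat \<Rightarrow> (nat \<Rightarrow> int) \<Rightarrow> nat \<Rightarrow> (nat \<Rightarrow> int)" where
  "ext3 m \<mu> t = \<mu>(3*m-1 := (if t=0 then - \<mu>(3*m-3) else \<mu>(3*m-3)),
                   3*m := (if t=1 then - \<mu>(3*m-3) else \<mu>(3*m-3)),
                   3*m+1 := (if t=2 then - \<mu>(3*m-3) else \<mu>(3*m-3)))"

lemma ext3_low: "1 \<le> m \<Longrightarrow> c \<le> 3*m-2 \<Longrightarrow> ext3 m \<mu> t c = \<mu> c"
  unfolding ext3_def by auto

lemma ext3_vals: "1 \<le> m \<Longrightarrow>
  ext3 m \<mu> t (3*m-1) = (if t=0 then - \<mu>(3*m-3) else \<mu>(3*m-3)) \<and>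
  ext3 m \<mu> t (3*m) = (if t=1 then - \<mu>(3*m-3) else \<mu>(3*m-3))"
  unfolding ext3_def by auto

lemma ext3_c: "1 \<le> m \<Longrightarrow>
  ext3 m \<mu> t (3*m+1) = (if t=2 then - \<mu>(3*m-3) else \<mu>(3*m-3))"
  unfolding ext3_def by simp

lemma ext3_a: "1 \<le> m \<Longrightarrow>
  ext3 m \<mu> t (3*m-1) = (if t=0 then - \<mu>(3*m-3) else \<mu>(3*m-3))"
  using ext3_vals by blast

lemma ext3_b: "1 \<le> m \<Longrightarrow>
  ext3 m \<mu> t (3*m) = (if t=1 then - \<mu>(3*m-3) else \<mu>(3*m-3))"
  using ext3_vals by blast

lemma set_eq_gen: "(\<And>c. c \<in> A \<Longrightarrow> f c = g c) \<Longrightarrow> f x = g x \<Longrightarrow>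
   {c \<in> A. f c \<noteq> f x} = {c \<in> A. g c \<noteq> g x}"
  by auto

lemma V_Suc: assumes m: "1 \<le> m"
  shows "OFG_vertices (Suc m) = (\<lambda>(\<mu>,t). ext3 m \<mu> t) ` (OFG_vertices m \<times> {0,1,2})"
proof
  show "(\<lambda>(\<mu>,t). ext3 m \<mu> t) ` (OFG_vertices m \<times> {0,1,2}) \<subseteq> OFG_vertices (Suc m)"
  proof clarify
    fix \<mu> and t :: nat
    assume mu: "\<mu> \<in> OFG_vertices m" and t: "t \<in> {0,1,2}"
    have lv: "\<mu> \<in> creases m \<rightarrow>\<^sub>E {1,-1}"
      "\<And>k. k\<in>{1..m-1} \<Longrightarrow> card {c \<in> {3*k-1, 3*k, 3*k+1}. \<mu> c \<noteq> \<mu> (3*k-3)} = 1"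
      using mu unfolding OFG_vertices_def locally_valid_def MV_assignments_def by auto
    have x: "\<mu> (3*m-3) \<in> {1,-1}" using lv(1) cr_left[of m m] m by force
    have pie: "ext3 m \<mu> t \<in> creases (Suc m) \<rightarrow>\<^sub>E {1,-1}"
    proof (rule PiE_I)
      fix c assume c: "c \<in> creases (Suc m)"
      show "ext3 m \<mu> t c \<in> {1,-1}"
      proof (cases "c \<in> creases m")
        case True
        have e: "ext3 m \<mu> t c = \<mu> c" using ext3_low[OF m cr_le[OF m True]] .
        have "\<mu> c \<in> {1,-1}" using lv(1) True by (rule PiE_mem)
        then show ?thesis using e by simp
      next
        case False
        then have "c = 3*m-1 \<or> c = 3*m \<or> c = 3*m+1" using c unfolding cr_Suc[OF m] by blast
        then show ?thesis using x ext3_a[OF m] ext3_b[OF m] ext3_c[OF m] by (elim disjE) auto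
      qed
    next
      fix c assume "c \<notin> creases (Suc m)"
      then have "c \<notin> creases m" "c \<noteq> 3*m-1" "c \<noteq> 3*m" "c \<noteq> 3*m+1"
        unfolding cr_Suc[OF m] by blast+
      moreover have "\<mu> c = undefined" using lv(1) \<open>c \<notin> creases m\<close> by (rule PiE_arb)
      ultimately show "ext3 m \<mu> t c = undefined" unfolding ext3_def by simp
    qed
    have vk: "card {c \<in> {3*k-1, 3*k, 3*k+1}. ext3 m \<mu> t c \<noteq> ext3 m \<mu> t (3*k-3)} = 1"
      if k: "k \<in> {1..Suc m - 1}" for k
    proof (cases "k = m")
      case True
      have e: "ext3 m \<mu> t (3*m-3) = \<mu> (3*m-3)" using ext3_low[OF m] m by simp
      show ?thesis unfolding True e
        apply (subst card3) using m apply simp_all[3]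
        using t x ext3_a[OF m, of \<mu> t] ext3_b[OF m, of \<mu> t] ext3_c[OF m, of \<mu> t] by auto
    next
      case False
      then have kk: "k \<in> {1..m-1}" using k by auto
      have "{c \<in> {3*k-1, 3*k, 3*k+1}. ext3 m \<mu> t c \<noteq> ext3 m \<mu> t (3*k-3)}
          = {c \<in> {3*k-1, 3*k, 3*k+1}. \<mu> c \<noteq> \<mu> (3*k-3)}"
      proof (rule set_eq_gen)
        fix c assume "c \<in> {3*k-1, 3*k, 3*k+1}"
        then have "c \<le> 3*m-2" using kk by auto
        then show "ext3 m \<mu> t c = \<mu> c" by (rule ext3_low[OF m])
      next
        show "ext3 m \<mu> t (3*k-3) = \<mu> (3*k-3)" using kk by (intro ext3_low[OF m]) auto
      qed
      then show ?thesis using lv(2)[OF kk] by simp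
    qed
    show "ext3 m \<mu> t \<in> OFG_vertices (Suc m)"
      unfolding OFG_vertices_def locally_valid_def MV_assignments_def using pie vk by auto
  qed
next
  show "OFG_vertices (Suc m) \<subseteq> (\<lambda>(\<mu>,t). ext3 m \<mu> t) ` (OFG_vertices m \<times> {0,1,2})"
  proof
    fix \<nu> assume nu: "\<nu> \<in> OFG_vertices (Suc m)"
    have lv: "\<nu> \<in> creases (Suc m) \<rightarrow>\<^sub>E {1,-1}"
      "\<And>k. k\<in>{1..m} \<Longrightarrow> card {c \<in> {3*k-1, 3*k, 3*k+1}. \<nu> c \<noteq> \<nu> (3*k-3)} = 1"
      using nu unfolding OFG_vertices_def locally_valid_def MV_assignments_def by auto
    define \<mu> where "\<mu> = restrict \<nu> (creases m)"
    have sub: "creases m \<subseteq> creases (Suc m)" using cr_Suc[OF m] by auto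
    have pie: "\<mu> \<in> creases m \<rightarrow>\<^sub>E {1,-1}" using lv(1) sub unfolding \<mu>_def by auto
    have vk: "card {c \<in> {3*k-1, 3*k, 3*k+1}. \<mu> c \<noteq> \<mu> (3*k-3)} = 1"
      if k: "k \<in> {1..m-1}" for k
    proof -
      have "k \<le> m" using k by auto
      have "{c \<in> {3*k-1, 3*k, 3*k+1}. \<mu> c \<noteq> \<mu> (3*k-3)}
          = {c \<in> {3*k-1, 3*k, 3*k+1}. \<nu> c \<noteq> \<nu> (3*k-3)}"
      proof (rule set_eq_gen)
        fix c assume "c \<in> {3*k-1, 3*k, 3*k+1}"
        then have "c \<in> creases m" using cr_mid[of k m] k by auto
        then show "\<mu> c = \<nu> c" unfolding \<mu>_def by simp
      next
        have "3*k-3 \<in> creases m" using cr_left[of k m] k \<open>k \<le> m\<close> by auto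
        then show "\<mu> (3*k-3) = \<nu> (3*k-3)" unfolding \<mu>_def by simp
      qed
      moreover have km: "k \<in> {1..m}" using k by auto
      ultimately show ?thesis using lv(2)[OF km] by (simp only:)
    qed
    have muV: "\<mu> \<in> OFG_vertices m"
      unfolding OFG_vertices_def locally_valid_def MV_assignments_def using pie vk by auto
    have l0: "3*m-3 \<in> creases m" using cr_left[of m m] m by auto
    have em: "\<mu> (3*m-3) = \<nu> (3*m-3)" using l0 unfolding \<mu>_def by auto
    have vals: "\<nu> (3*m-1) \<in> {1,-1}" "\<nu> (3*m) \<in> {1,-1}" "\<nu> (3*m+1) \<in> {1,-1}"
      "\<nu> (3*m-3) \<in> {1,-1}"
    proof -
      have n: "3*m-1 \<in> creases (Suc m)" "3*m \<in> creases (Suc m)" "3*m+1 \<in> creases (Suc m)"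
        "3*m-3 \<in> creases (Suc m)"
        unfolding cr_Suc[OF m] using l0 by blast+
      show "\<nu> (3*m-1) \<in> {1,-1}" using lv(1) n(1) by (rule PiE_mem)
      show "\<nu> (3*m) \<in> {1,-1}" using lv(1) n(2) by (rule PiE_mem)
      show "\<nu> (3*m+1) \<in> {1,-1}" using lv(1) n(3) by (rule PiE_mem)
      show "\<nu> (3*m-3) \<in> {1,-1}" using lv(1) n(4) by (rule PiE_mem)
    qed
    have mm: "m \<in> {1..m}" using m by simp
    have cm: "card {c \<in> {3*m-1, 3*m, 3*m+1}. \<nu> c \<noteq> \<nu> (3*m-3)} = 1" by (rule lv(2)[OF mm])
    then have cm': "(\<nu> (3*m-1) \<noteq> \<nu> (3*m-3) \<and> \<nu> (3*m) = \<nu> (3*m-3) \<and> \<nu> (3*m+1) = \<nu> (3*m-3))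
      \<or> (\<nu> (3*m-1) = \<nu> (3*m-3) \<and> \<nu> (3*m) \<noteq> \<nu> (3*m-3) \<and> \<nu> (3*m+1) = \<nu> (3*m-3))
      \<or> (\<nu> (3*m-1) = \<nu> (3*m-3) \<and> \<nu> (3*m) = \<nu> (3*m-3) \<and> \<nu> (3*m+1) \<noteq> \<nu> (3*m-3))"
      by (subst (asm) card3) (use m in auto)
    obtain t :: nat where t: "t \<in> {0,1,2}"
      and tv: "\<nu> (3*m-1) = (if t=0 then - \<nu>(3*m-3) else \<nu>(3*m-3))"
              "\<nu> (3*m) = (if t=1 then - \<nu>(3*m-3) else \<nu>(3*m-3))"
              "\<nu> (3*m+1) = (if t=2 then - \<nu>(3*m-3) else \<nu>(3*m-3))"
    proof -
      from cm' vals show thesis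
        apply (elim disjE)
        subgoal by (rule that[of 0]) auto
        subgoal by (rule that[of 1]) auto
        subgoal by (rule that[of 2]) auto
        done
    qed
    have "\<nu> = ext3 m \<mu> t"
    proof
      fix c
      show "\<nu> c = ext3 m \<mu> t c"
      proof (cases "c \<in> creases m")
        case True
        then show ?thesis using ext3_low[OF m cr_le[OF m True]] unfolding \<mu>_def by simp
      next
        case False
        show ?thesis
        proof (cases "c \<in> {3*m-1, 3*m, 3*m+1}")
          case True
          then show ?thesis using tv em ext3_a[OF m, of \<mu> t] ext3_b[OF m, of \<mu> t] ext3_c[OF m, of \<mu> t]
            by (elim insertE) auto
        next
          case F2: False
          then have "c \<notin> creases (Suc m)" using False unfolding cr_Suc[OF m] by blast
          then have "\<nu> c = undefined" using lv(1) by (rule PiE_arb[rotated])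
          moreover have "c \<noteq> 3*m-1" "c \<noteq> 3*m" "c \<noteq> 3*m+1" using F2 by blast+
          ultimately show ?thesis using False unfolding ext3_def \<mu>_def by simp
        qed
      qed
    qed
    then show "\<nu> \<in> (\<lambda>(\<mu>,t). ext3 m \<mu> t) ` (OFG_vertices m \<times> {0,1,2})"
      using muV t by blast
  qed
qed

lemma inj_ext3: assumes m: "1 \<le> m"
  shows "inj_on (\<lambda>(\<mu>,t). ext3 m \<mu> t) (OFG_vertices m \<times> {0,1,2})"
proof (rule inj_onI, clarify)
  fix \<mu> \<mu>' and t t' :: nat
  assume a: "\<mu> \<in> OFG_vertices m" "t \<in> {0,1,2}" "\<mu>' \<in> OFG_vertices m" "t' \<in> {0,1,2}"
    and eq: "ext3 m \<mu> t = ext3 m \<mu>' t'"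
  have pe: "\<mu> \<in> creases m \<rightarrow>\<^sub>E {1,-1}" "\<mu>' \<in> creases m \<rightarrow>\<^sub>E {1,-1}"
    using a unfolding OFG_vertices_def locally_valid_def MV_assignments_def by auto
  have nm: "c \<notin> creases m" if "c \<ge> 3*m-1" for c using cr_le[OF m, of c] that m by auto
  have "\<mu> c = \<mu>' c" for c
  proof (cases "c \<in> creases m")
    case True
    then show ?thesis using eq ext3_low[OF m cr_le[OF m True]] by metis
  next
    case False
    then show ?thesis using pe PiE_arb by metis
  qed
  then have mu: "\<mu> = \<mu>'" by auto
  have x: "\<mu> (3*m-3) \<in> {1,-1}" using pe(1) cr_left[of m m] m by force
  have "ext3 m \<mu> t (3*m-1) = ext3 m \<mu> t' (3*m-1)" "ext3 m \<mu> t (3*m) = ext3 m \<mu> t' (3*m)"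
    using eq mu by auto
  then have "(if t=0 then - \<mu>(3*m-3) else \<mu>(3*m-3)) = (if t'=0 then - \<mu>(3*m-3) else \<mu>(3*m-3))"
    "(if t=1 then - \<mu>(3*m-3) else \<mu>(3*m-3)) = (if t'=1 then - \<mu>(3*m-3) else \<mu>(3*m-3))"
    using ext3_vals[OF m, of \<mu>] by metis+
  then show "\<mu> = \<mu>' \<and> t = t'" using mu a(2,4) x by (auto split: if_splits)
qed

lemma card_V: "1 \<le> n \<Longrightarrow> card (OFG_vertices n) = 2 * 3 ^ (n - 1)"
proof (induction n rule: dec_induct)
  case base
  have "creases 1 = {0}" unfolding creases_def by auto
  then have "OFG_vertices 1 = {0} \<rightarrow>\<^sub>E {1,-1::int}"
    unfolding OFG_vertices_def locally_valid_def MV_assignments_def by auto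
  then show ?case by (simp add: card_PiE)
next
  case (step m)
  have "card (OFG_vertices (Suc m)) = card (OFG_vertices m \<times> {0,1,2::nat})"
    using V_Suc[OF step(1)] card_image[OF inj_ext3[OF step(1)]] by simp
  also have "\<dots> = card (OFG_vertices m) * 3" by (simp add: card_cartesian_product)
  finally show ?case using step by (cases m) auto
qed

theorem theorem3p1:
  fixes n :: nat
  assumes "n \<ge> 1"
  shows "card (fst (OFG n)) = 2 * 3 ^ (n - 1)"
  using card_V[OF assms] unfolding OFG_def by simp

end
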